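(* The Minkowski sum $X+I$ of a closed $\ell_1$-convex set $X\subseteq\mathbb{R}^n$ and an interval $I\subseteq\mathbb{R}^n$ is $\ell_1$-convex.
   Context: A subset $X\subseteq\mathbb{R}^n$ is $\ell_1$-convex if for all $x,x'\in X$, with $D=\sum_i|x_i-x'_i|$, there is $\gamma\colon[0,D]\to X$ with $\gamma(0)=x,\gamma(D)=x'$ and $\sum_i|\gamma_i(t)-\gamma_i(t')|=|t-t'|$ for all $t,t'$. An interval in $\mathbb{R}^n$ is a set $\prod_{i=1}^n I_i$ with each $I_i\subseteq\mathbb{R}$ a (possibly empty, possibly unbounded) interval. *)

theory Defs
  imports "HOL-Analysis.Analysis"
begin

definition l1dist :: "real^'n \<Rightarrow> real^'n \<Rightarrow> real" where
  "l1dist x y = (\<Sum>i\<in>UNIV. \<bar>x $ i - y $ i\<bar>)"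

definition l1_convex :: "(real^'n) set \<Rightarrow> bool" where
  "l1_convex X \<longleftrightarrow>
     (\<forall>x\<in>X. \<forall>x'\<in>X. \<exists>\<gamma> :: real \<Rightarrow> real^'n.
        \<gamma> 0 = x \<and> \<gamma> (l1dist x x') = x' \<and>
        (\<forall>t\<in>{0..l1dist x x'}. \<gamma> t \<in> X) \<and>
        (\<forall>t\<in>{0..l1dist x x'}. \<forall>t'\<in>{0..l1dist x x'}. l1dist (\<gamma> t) (\<gamma> t') = \<bar>t - t'\<bar>))"

definition box_interval :: "(real^'n) set \<Rightarrow> bool" where
  "box_interval S \<longleftrightarrow>
     (\<exists>I :: 'n \<Rightarrow> real set. (\<forall>i. is_interval (I i)) \<and> S = {x. \<forall>i. x $ i \<in> I i})"

definition minkowski_sum :: "(real^'n) set \<Rightarrow> (real^'n) set \<Rightarrow> (real^'n) set" where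
  "minkowski_sum A B = {a + b | a b. a \<in> A \<and> b \<in> B}"

end

theory Submission imports Defs begin

lemma l1dist_commute: "l1dist x y = l1dist y x"
  unfolding l1dist_def by (simp add: abs_minus_commute)

lemma l1dist_nonneg: "l1dist x y \<ge> 0"
  unfolding l1dist_def by (simp add: sum_nonneg)

lemma l1dist_zero: "l1dist x y = 0 \<longleftrightarrow> x = y"
  unfolding l1dist_def by (auto simp: sum_nonneg_eq_0_iff vec_eq_iff)

lemma l1dist_eq_iff:
  "l1dist p q + l1dist q r = l1dist p r \<longleftrightarrow> (\<forall>i. \<bar>p$i - q$i\<bar> + \<bar>q$i - r$i\<bar> = \<bar>p$i - r$i\<bar>)"
proof -
  have "l1dist p q + l1dist q r - l1dist p r = (\<Sum>i\<in>UNIV. \<bar>p$i - q$i\<bar> + \<bar>q$i - r$i\<bar> - \<bar>p$i - r$i\<bar>)"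
    unfolding l1dist_def by (simp add: sum.distrib sum_subtractf)
  moreover have "\<forall>i\<in>UNIV. \<bar>p$i - q$i\<bar> + \<bar>q$i - r$i\<bar> - \<bar>p$i - r$i\<bar> \<ge> 0" by auto
  then have "(\<Sum>i\<in>UNIV. \<bar>p$i - q$i\<bar> + \<bar>q$i - r$i\<bar> - \<bar>p$i - r$i\<bar>) = 0 \<longleftrightarrow> (\<forall>i\<in>UNIV. \<bar>p$i - q$i\<bar> + \<bar>q$i - r$i\<bar> - \<bar>p$i - r$i\<bar> = 0)"
    by (intro sum_nonneg_eq_0_iff) auto
  ultimately show ?thesis by auto
qed

lemma oned:
  fixes x xe b b' g1 g2 h1 h2 :: real
  assumes "\<bar>x-g1\<bar>+\<bar>g1-g2\<bar> = \<bar>x-g2\<bar>" "\<bar>x-g2\<bar>+\<bar>g2-xe\<bar> = \<bar>x-xe\<bar>"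
    "0 \<le> h1" "h1 \<le> h2" "h2 \<le> 1" "h1 > 0 \<Longrightarrow> g1 = xe" "h2 > 0 \<Longrightarrow> g2 = xe"
  shows "\<bar>(x+b) - (g1 + max (min b b') (min (max b b') (b-g1+x)) + h1*(b' - max (min b b') (min (max b b') (b-xe+x))))\<bar>
   + \<bar>(g1 + max (min b b') (min (max b b') (b-g1+x)) + h1*(b' - max (min b b') (min (max b b') (b-xe+x))))
     - (g2 + max (min b b') (min (max b b') (b-g2+x)) + h2*(b' - max (min b b') (min (max b b') (b-xe+x))))\<bar>
   = \<bar>(x+b) - (g2 + max (min b b') (min (max b b') (b-g2+x)) + h2*(b' - max (min b b') (min (max b b') (b-xe+x))))\<bar>"
proof -
  define cE where "cE = max (min b b') (min (max b b') (b-xe+x))"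
  define d where "d = b' - cE"
  have p: "h1*d \<le> h2*d \<and> 0 \<le> h1*d" if "d \<ge> 0" using that assms by (simp add: mult_right_mono)
  have n: "h1*d \<ge> h2*d \<and> 0 \<ge> h1*d" if "d \<le> 0" using that assms
    by (simp add: mult_right_mono_neg mult_nonneg_nonpos)
  have z: "h1*d = 0" if "h1 = 0" using that by simp
  have z2: "h2*d = 0" if "h2 = 0" using that by simp
  show ?thesis unfolding cE_def[symmetric] d_def[symmetric]
    using p n z z2 assms cE_def d_def by (cases "d \<ge> 0"; cases "h1 = 0"; cases "h2 = 0"; smt (verit))
qed

lemma reparam:
  fixes \<delta> :: "real \<Rightarrow> real^'n"
  assumes S: "S \<ge> 0"
    and cont: "\<And>i. continuous_on {0..S} (\<lambda>s. \<delta> s $ i)"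
    and d0: "\<delta> 0 = y" and dS: "\<delta> S = y'"
    and inY: "\<And>s. s \<in> {0..S} \<Longrightarrow> \<delta> s \<in> Y"
    and mono: "\<And>s s'. 0 \<le> s \<Longrightarrow> s \<le> s' \<Longrightarrow> s' \<le> S \<Longrightarrow>
       l1dist y (\<delta> s) + l1dist (\<delta> s) (\<delta> s') = l1dist y (\<delta> s')"
  shows "\<exists>\<gamma> :: real \<Rightarrow> real^'n.
        \<gamma> 0 = y \<and> \<gamma> (l1dist y y') = y' \<and>
        (\<forall>t\<in>{0..l1dist y y'}. \<gamma> t \<in> Y) \<and>
        (\<forall>t\<in>{0..l1dist y y'}. \<forall>t'\<in>{0..l1dist y y'}. l1dist (\<gamma> t) (\<gamma> t') = \<bar>t - t'\<bar>)"
proof -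
  define L where "L s = l1dist y (\<delta> s)" for s
  define D where "D = l1dist y y'"
  have Lc: "continuous_on {0..S} L"
    unfolding L_def l1dist_def by (intro continuous_intros cont)
  have L0: "L 0 = 0" using d0 by (simp add: L_def l1dist_zero)
  have LS: "L S = D" using dS by (simp add: L_def D_def)
  have ex: "\<exists>s. s \<in> {0..S} \<and> L s = t" if "t \<in> {0..D}" for t
    using IVT'[of L 0 t S] that L0 LS Lc S by auto
  define \<sigma> where "\<sigma> t = (SOME s. s \<in> {0..S} \<and> L s = t)" for t
  have \<sigma>: "\<sigma> t \<in> {0..S} \<and> L (\<sigma> t) = t" if "t \<in> {0..D}" for t
    unfolding \<sigma>_def using someI_ex[OF ex[OF that]] .
  have D0: "D \<ge> 0" by (simp add: D_def l1dist_nonneg)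
  have key: "l1dist (\<delta> s) (\<delta> s') = \<bar>L s - L s'\<bar>" if "s \<in> {0..S}" "s' \<in> {0..S}" for s s'
  proof (cases "s \<le> s'")
    case True
    then show ?thesis using mono[of s s'] that l1dist_nonneg[of "\<delta> s" "\<delta> s'"] by (auto simp: L_def)
  next
    case False
    then show ?thesis using mono[of s' s] that l1dist_nonneg[of "\<delta> s" "\<delta> s'"]
      by (auto simp: L_def l1dist_commute)
  qed
  show ?thesis
  proof (intro exI[of _ "\<lambda>t. \<delta> (\<sigma> t)"] conjI ballI)
    show "\<delta> (\<sigma> 0) = y" using \<sigma>[of 0] D0 by (simp add: L_def l1dist_zero)
    have "l1dist (\<delta> (\<sigma> D)) y' = 0"
      using mono[of "\<sigma> D" S] \<sigma>[of D] D0 dS LS by (auto simp: L_def)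
    then show "\<delta> (\<sigma> (l1dist y y')) = y'" by (simp add: D_def l1dist_zero)
    show "\<delta> (\<sigma> t) \<in> Y" if "t \<in> {0..l1dist y y'}" for t using \<sigma>[of t] that inY by (auto simp: D_def)
    show "l1dist (\<delta> (\<sigma> t)) (\<delta> (\<sigma> t')) = \<bar>t - t'\<bar>" if "t \<in> {0..l1dist y y'}" "t' \<in> {0..l1dist y y'}" for t t'
      using key[of "\<sigma> t" "\<sigma> t'"] \<sigma>[of t] \<sigma>[of t'] that by (auto simp: D_def)
  qed
qed


lemma geo_betw:
  fixes \<gamma> :: "real \<Rightarrow> real^'n"
  assumes "\<gamma> 0 = x" "\<forall>t\<in>{0..D}. \<forall>t'\<in>{0..D}. l1dist (\<gamma> t) (\<gamma> t') = \<bar>t - t'\<bar>"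
    "0 \<le> a" "a \<le> a'" "a' \<le> D"
  shows "\<bar>x$i - \<gamma> a $ i\<bar> + \<bar>\<gamma> a $ i - \<gamma> a' $ i\<bar> = \<bar>x$i - \<gamma> a' $ i\<bar>"
proof -
  have "l1dist x (\<gamma> a) + l1dist (\<gamma> a) (\<gamma> a') = l1dist x (\<gamma> a')"
    using assms(2) assms(3-5) by (auto simp: assms(1)[symmetric] dest!: bspec[of _ _ 0])
  then show ?thesis unfolding l1dist_eq_iff by blast
qed

lemma conv_bound:
  fixes m M c b h :: real
  assumes "m \<le> c" "c \<le> M" "m \<le> b" "b \<le> M" "0 \<le> h" "h \<le> 1"
  shows "m \<le> c + h*(b - c) \<and> c + h*(b - c) \<le> M"
proof -
  have "c + h*(b-c) = (1-h)*c + h*b" by (simp add: algebra_simps)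
  moreover have "(1-h)*m \<le> (1-h)*c" "(1-h)*c \<le> (1-h)*M" "h*m \<le> h*b" "h*b \<le> h*M"
    using assms by (auto intro: mult_left_mono)
  ultimately show ?thesis by (simp add: algebra_simps)
qed

theorem proposition2p3:
  fixes X I :: "(real^'n) set"
  assumes "closed X" and "l1_convex X" and "box_interval I"
  shows "l1_convex (minkowski_sum X I)"
  unfolding l1_convex_def
proof (intro ballI)
  fix y y' assume "y \<in> minkowski_sum X I" "y' \<in> minkowski_sum X I"
  then obtain x b x' b' where xX: "x \<in> X" and bI: "b \<in> I" and x'X: "x' \<in> X" and b'I: "b' \<in> I"
    and y: "y = x + b" and y': "y' = x' + b'"
    unfolding minkowski_sum_def by blast
  obtain Ii where Ii: "\<And>i. is_interval (Ii i)" and Idef: "I = {z. \<forall>i. z $ i \<in> Ii i}"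
    using assms(3) unfolding box_interval_def by blast
  define D0 where "D0 = l1dist x x'"
  obtain \<gamma> where g0: "\<gamma> 0 = x" and gD: "\<gamma> D0 = x'" and gX: "\<forall>t\<in>{0..D0}. \<gamma> t \<in> X"
    and gd: "\<forall>t\<in>{0..D0}. \<forall>t'\<in>{0..D0}. l1dist (\<gamma> t) (\<gamma> t') = \<bar>t - t'\<bar>"
    using assms(2) xX x'X unfolding l1_convex_def D0_def by blast
  have D0pos: "D0 \<ge> 0" by (simp add: D0_def l1dist_nonneg)
  define cl where "cl i v = max (min (b$i) (b'$i)) (min (max (b$i) (b'$i)) v)" for i v
  define g where "g s = \<gamma> (min s D0)" for s
  define h where "h s = max 0 (min 1 (s - D0))" for s :: real
  define cE where "cE i = cl i (b$i - x'$i + x$i)" for i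
  define \<delta> where "\<delta> s = g s + (\<chi> i. cl i (b$i - g s $ i + x$i) + h s * (b'$i - cE i))" for s
  show "\<exists>\<gamma>. \<gamma> 0 = y \<and> \<gamma> (l1dist y y') = y' \<and>
        (\<forall>t\<in>{0..l1dist y y'}. \<gamma> t \<in> minkowski_sum X I) \<and>
        (\<forall>t\<in>{0..l1dist y y'}. \<forall>t'\<in>{0..l1dist y y'}. l1dist (\<gamma> t) (\<gamma> t') = \<bar>t - t'\<bar>)"
  proof (rule reparam[where S = "D0 + 1" and \<delta> = \<delta>])
    show "0 \<le> D0 + 1" using D0pos by simp
    have gcomp: "continuous_on {0..D0} (\<lambda>t. \<gamma> t $ i)" for i
    proof (rule lipschitz_on_continuous_on)
      show "1-lipschitz_on {0..D0} (\<lambda>t. \<gamma> t $ i)"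
      proof (rule lipschitz_onI)
        fix t t' assume tt: "t \<in> {0..D0}" "t' \<in> {0..D0}"
        have "\<bar>\<gamma> t $ i - \<gamma> t' $ i\<bar> \<le> l1dist (\<gamma> t) (\<gamma> t')"
          unfolding l1dist_def by (rule member_le_sum) auto
        then show "dist (\<gamma> t $ i) (\<gamma> t' $ i) \<le> 1 * dist t t'"
          using gd tt by (simp add: dist_real_def)
      qed simp
    qed
    have gc: "continuous_on {0..D0+1} (\<lambda>s. g s $ i)" for i
      unfolding g_def
      by (rule continuous_on_compose2[OF gcomp]) (auto intro!: continuous_intros simp: D0pos)
    show "continuous_on {0..D0 + 1} (\<lambda>s. \<delta> s $ i)" for i
      unfolding \<delta>_def h_def cl_def by (auto intro!: continuous_intros gc)
    show "\<delta> 0 = y" using D0pos g0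
      by (simp add: \<delta>_def g_def h_def cl_def y vec_eq_iff)
    show "\<delta> (D0 + 1) = y'" using D0pos gD
      by (simp add: \<delta>_def g_def h_def cE_def y' vec_eq_iff)
    show "\<delta> s \<in> minkowski_sum X I" if "s \<in> {0..D0 + 1}" for s
    proof -
      have "g s \<in> X" using gX that D0pos by (auto simp: g_def)
      moreover have "(\<chi> i. cl i (b$i - g s $ i + x$i) + h s * (b'$i - cE i)) \<in> I"
        unfolding Idef
      proof (intro CollectI allI)
        fix i
        have bi: "b$i \<in> Ii i" "b'$i \<in> Ii i" using bI b'I Idef by auto
        have "min (b$i) (b'$i) \<le> cl i (b$i - g s $ i + x$i) + h s * (b'$i - cE i) \<and>
              cl i (b$i - g s $ i + x$i) + h s * (b'$i - cE i) \<le> max (b$i) (b'$i)"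
        proof (cases "s \<le> D0")
          case True
          then have "h s = 0" by (simp add: h_def)
          then show ?thesis by (simp add: cl_def)
        next
          case False
          then have "g s = x'" using gD by (simp add: g_def)
          then have e: "cl i (b$i - g s $ i + x$i) = cE i" by (simp add: cE_def)
          have "min (b$i) (b'$i) \<le> cE i" "cE i \<le> max (b$i) (b'$i)" "0 \<le> h s" "h s \<le> 1"
            by (auto simp: cE_def cl_def h_def)
          then show ?thesis unfolding e
            by (intro conv_bound) auto
        qed
        then have mm: "min (b$i) (b'$i) \<le> cl i (b$i - g s $ i + x$i) + h s * (b'$i - cE i)"
           "cl i (b$i - g s $ i + x$i) + h s * (b'$i - cE i) \<le> max (b$i) (b'$i)" by auto
        have II: "\<And>a c v. a \<in> Ii i \<Longrightarrow> c \<in> Ii i \<Longrightarrow> a \<le> v \<Longrightarrow> v \<le> c \<Longrightarrow> v \<in> Ii i"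
          using Ii[of i] unfolding is_interval_1 by blast
        have "cl i (b$i - g s $ i + x$i) + h s * (b'$i - cE i) \<in> Ii i"
        proof (cases "b$i \<le> b'$i")
          case True
          then show ?thesis using II[OF bi(1) bi(2)] mm by (simp add: min_def max_def)
        next
          case False
          then show ?thesis using II[OF bi(2) bi(1)] mm by (simp add: min_def max_def)
        qed
        then show "(\<chi> i. cl i (b$i - g s $ i + x$i) + h s * (b'$i - cE i)) $ i \<in> Ii i"
          by simp
      qed
      ultimately show ?thesis unfolding \<delta>_def minkowski_sum_def by blast
    qed
    show "l1dist y (\<delta> s) + l1dist (\<delta> s) (\<delta> s') = l1dist y (\<delta> s')"
      if "0 \<le> s" "s \<le> s'" "s' \<le> D0 + 1" for s s'
      unfolding l1dist_eq_iff
    proof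
      fix i
      have m: "0 \<le> min s D0" "min s D0 \<le> min s' D0" "min s' D0 \<le> D0"
        using that D0pos by auto
      have b1: "\<bar>x$i - g s $ i\<bar> + \<bar>g s $ i - g s' $ i\<bar> = \<bar>x$i - g s' $ i\<bar>"
        unfolding g_def by (rule geo_betw[OF g0 gd m(1,2)]) (use m in auto)
      have b2: "\<bar>x$i - g s' $ i\<bar> + \<bar>g s' $ i - x'$i\<bar> = \<bar>x$i - x'$i\<bar>"
        unfolding g_def using geo_betw[OF g0 gd, of "min s' D0" D0 i] m gD by auto
      have hs: "0 \<le> h s" "h s \<le> h s'" "h s' \<le> 1" using that by (auto simp: h_def)
      have h1: "g s $ i = x' $ i" if "h s > 0" using that gD by (auto simp: h_def g_def)
      have h2: "g s' $ i = x' $ i" if "h s' > 0" using that gD by (auto simp: h_def g_def)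
      show "\<bar>y$i - \<delta> s $ i\<bar> + \<bar>\<delta> s $ i - \<delta> s' $ i\<bar> = \<bar>y$i - \<delta> s' $ i\<bar>"
      proof -
        have e1: "\<delta> s $ i = g s $ i + cl i (b$i - g s$i + x$i) + h s * (b'$i - cl i (b$i - x'$i + x$i))"
          by (simp add: \<delta>_def cE_def)
        have e2: "\<delta> s' $ i = g s' $ i + cl i (b$i - g s'$i + x$i) + h s' * (b'$i - cl i (b$i - x'$i + x$i))"
          by (simp add: \<delta>_def cE_def)
        have ey: "y $ i = x$i + b$i" by (simp add: y)
        show ?thesis unfolding e1 e2 ey cl_def
          using oned[OF b1 b2 hs h1 h2, of "b$i" "b'$i"] .
      qed
    qed
  qed
qed

end
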